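(* Let $\kappa\ge1$ and $n\ge1$ be integers, let $G$ be a binary $\kappa\times n$ matrix, and let $q$ be its code definition vector. For a subset $R\subseteq\{1,\dots,n\}$ let $G_R$ be the submatrix of $G$ consisting of the columns indexed by $R$ (rank over $\mathbb{F}_2$, with $\mathrm{rank}(G_\emptyset)=0$). (a) For an integer $0<\mu\le n$, let $R$ be a uniformly random $\mu$-element subset of $\{1,\dots,n\}$ and set $L(n,\mu,q)=\mathbb{E}\big[|R|-\mathrm{rank}(G_R)\big]$. Then $L(n,\mu,q)=\mu-\kappa+\sum_{\delta=1}^{\kappa}K_\delta\sum_{S\in\Xi(W,\kappa-\delta)}\Phi(S,n,\mu,q).$ (b) For $0\le\epsilon\le1$, let $R$ be a random subset of $\{1,\dots,n\}$ containing each index independently with probability $1-\epsilon$, and set $l(n,\epsilon,q)=\mathbb{E}\big[|R|-\mathrm{rank}(G_R)\big]$. Then $l(n,\epsilon,q)=n(1-\epsilon)-\kappa+\sum_{\delta=1}^{\kappa}K_\delta\sum_{S\in\Xi(W,\kappa-\delta)}\phi(S,n,\epsilon,q),$ where in both cases $K_\delta=\prod_{i=1}^{\delta-1}(1-2^i)$ (so $K_1=1$).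
   Context: $W=\mathbb{F}_2^\kappa$; $\nu(i)\in W$ is the binary expansion of $i\in\{0,\dots,2^\kappa-1\}$. The code definition vector of a binary $\kappa\times n$ matrix $G$ is $q=(q_0,\dots,q_{2^\kappa-1})$ with $q_i$ equal to the number of columns of $G$ equal to $\nu(i)$, divided by $n$. For a subspace $S\subseteq W$, $\zeta(S,q)=\sum_{i:\nu(i)\in S}q_i$; $\Xi(S,d)$ is the set of all $d$-dimensional subspaces of $S$. Define $\Phi(S,n,\mu,q)=\prod_{i=0}^{\mu-1}\frac{\zeta(S,q)-i/n}{1-i/n}$ and $\phi(S,n,\epsilon,q)=\epsilon^{n(1-\zeta(S,q))}$ (convention $0^0=1$). (In the wiretap setting, for a coset code with base-code generator matrix $G$ and uniformly distributed message, $|R|-\mathrm{rank}(G_R)$ is the eavesdropper's information loss $I(M;Z)$ given revealed positions $R$, so $L$ and $l$ are the expected equivocation losses.) *)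

theory Defs
  imports Complex_Main "HOL-Library.Z2" "HOL-Library.Function_Algebras"
begin

text \<open>Vectors of W = F_2^kappa are represented as functions nat => bit that vanish
  at all coordinates >= kappa. Vector space structure over the field bit = F_2.\<close>

definition vscale :: "bit \<Rightarrow> (nat \<Rightarrow> bit) \<Rightarrow> (nat \<Rightarrow> bit)" where
  "vscale c v = (\<lambda>i. c * v i)"

definition Wsp :: "nat \<Rightarrow> (nat \<Rightarrow> bit) set" where
  "Wsp \<kappa> = {v. \<forall>i\<ge>\<kappa>. v i = 0}"

definition F2subspace :: "(nat \<Rightarrow> bit) set \<Rightarrow> bool" where
  "F2subspace S = module.subspace vscale S"

definition F2dim :: "(nat \<Rightarrow> bit) set \<Rightarrow> nat" where
  "F2dim S = vector_space.dim vscale S"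

definition Xi :: "(nat \<Rightarrow> bit) set \<Rightarrow> nat \<Rightarrow> (nat \<Rightarrow> bit) set set" where
  "Xi S d = {T. F2subspace T \<and> T \<subseteq> S \<and> F2dim T = d}"

text \<open>binary expansion nu(i) in W (bit j of i is coordinate j)\<close>
definition nu :: "nat \<Rightarrow> nat \<Rightarrow> (nat \<Rightarrow> bit)" where
  "nu \<kappa> i = (\<lambda>j. if j < \<kappa> then of_bool (odd (i div 2 ^ j)) else 0)"

text \<open>A binary kappa x n matrix G is given as G :: nat => nat => bit (row, column),
  rows 0..<kappa, columns 0..<n; column j as a vector of W.\<close>
definition col :: "nat \<Rightarrow> (nat \<Rightarrow> nat \<Rightarrow> bit) \<Rightarrow> nat \<Rightarrow> (nat \<Rightarrow> bit)" where
  "col \<kappa> G j = (\<lambda>i. if i < \<kappa> then G i j else 0)"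

definition rankR :: "nat \<Rightarrow> (nat \<Rightarrow> nat \<Rightarrow> bit) \<Rightarrow> nat set \<Rightarrow> nat" where
  "rankR \<kappa> G R = F2dim (col \<kappa> G ` R)"

definition cdv :: "nat \<Rightarrow> nat \<Rightarrow> (nat \<Rightarrow> nat \<Rightarrow> bit) \<Rightarrow> nat \<Rightarrow> real" where
  "cdv \<kappa> n G i = real (card {j. j < n \<and> col \<kappa> G j = nu \<kappa> i}) / real n"

definition zeta :: "nat \<Rightarrow> (nat \<Rightarrow> bit) set \<Rightarrow> (nat \<Rightarrow> real) \<Rightarrow> real" where
  "zeta \<kappa> S q = (\<Sum>i\<in>{i. i < 2 ^ \<kappa> \<and> nu \<kappa> i \<in> S}. q i)"

definition Phi :: "nat \<Rightarrow> (nat \<Rightarrow> bit) set \<Rightarrow> nat \<Rightarrow> nat \<Rightarrow> (nat \<Rightarrow> real) \<Rightarrow> real" where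
  "Phi \<kappa> S n \<mu> q = (\<Prod>i<\<mu>. (zeta \<kappa> S q - real i / real n) / (1 - real i / real n))"

text \<open>phi with the convention 0^0 = 1\<close>
definition phi :: "nat \<Rightarrow> (nat \<Rightarrow> bit) set \<Rightarrow> nat \<Rightarrow> real \<Rightarrow> (nat \<Rightarrow> real) \<Rightarrow> real" where
  "phi \<kappa> S n \<epsilon> q = (let e = real n * (1 - zeta \<kappa> S q) in if e = 0 then 1 else \<epsilon> powr e)"

definition Kc :: "nat \<Rightarrow> real" where
  "Kc \<delta> = (\<Prod>i\<in>{1..<\<delta>}. 1 - 2 ^ i)"

definition Lloss :: "nat \<Rightarrow> nat \<Rightarrow> (nat \<Rightarrow> nat \<Rightarrow> bit) \<Rightarrow> nat \<Rightarrow> real" where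
  "Lloss \<kappa> n G \<mu> = (\<Sum>R\<in>{R. R \<subseteq> {..<n} \<and> card R = \<mu>}.
       real (card R) - real (rankR \<kappa> G R)) / real (n choose \<mu>)"

definition lloss :: "nat \<Rightarrow> nat \<Rightarrow> (nat \<Rightarrow> nat \<Rightarrow> bit) \<Rightarrow> real \<Rightarrow> real" where
  "lloss \<kappa> n G \<epsilon> = (\<Sum>R\<in>Pow {..<n}.
       (1 - \<epsilon>) ^ card R * \<epsilon> ^ (n - card R) * (real (card R) - real (rankR \<kappa> G R)))"

end

theory Submission
  imports Defs "HOL-Library.FuncSet"
begin


interpretation F: vector_space vscale
  by unfold_locales (auto simp: vscale_def fun_eq_iff algebra_simps)

lemma card_bit: "card (UNIV::bit set) = 2"
proof -
  have "(UNIV::bit set) = {0,1}" by (auto intro: bit.exhaust)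
  moreover have "card {0::bit,1} = 2" by simp
  ultimately show ?thesis by metis
qed

lemma span_insert_F2: "F.span (insert a S) = F.span S \<union> (\<lambda>y. y + a) ` F.span S"
proof -
  have "x \<in> F.span (insert a S) \<longleftrightarrow> x \<in> F.span S \<or> x - a \<in> F.span S" for x
  proof -
    have "(\<exists>k. x - vscale k a \<in> F.span S) \<longleftrightarrow> x - vscale 0 a \<in> F.span S \<or> x - vscale 1 a \<in> F.span S"
      by (metis bit.exhaust)
    moreover have "vscale 0 a = 0" "vscale 1 a = a" by (auto simp: vscale_def fun_eq_iff)
    ultimately show ?thesis by (simp add: F.span_insert)
  qed
  moreover have "x - a \<in> F.span S \<longleftrightarrow> x \<in> (\<lambda>y. y + a) ` F.span S" for x
    by (auto simp: image_iff) (metis diff_add_cancel)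
  ultimately show ?thesis by blast
qed

lemma card_span_insert:
  assumes "finite (F.span S)" "a \<notin> F.span S"
  shows "card (F.span (insert a S)) = 2 * card (F.span S)" "finite (F.span (insert a S))"
proof -
  have disj: "F.span S \<inter> (\<lambda>y. y + a) ` F.span S = {}"
  proof (rule ccontr)
    assume "F.span S \<inter> (\<lambda>y. y + a) ` F.span S \<noteq> {}"
    then obtain y where y: "y \<in> F.span S" "y + a \<in> F.span S" by auto
    hence "(y + a) - y \<in> F.span S" by (rule_tac F.span_diff) auto
    thus False using assms(2) by simp
  qed
  have inj: "inj_on (\<lambda>y. y + a) (F.span S)" by (rule inj_onI) simp
  show "card (F.span (insert a S)) = 2 * card (F.span S)"
    unfolding span_insert_F2 using assms(1) disj
    by (subst card_Un_disjoint) (auto simp: card_image[OF inj])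
  show "finite (F.span (insert a S))" unfolding span_insert_F2 using assms(1) by simp
qed

lemma card_span_indep:
  assumes "finite B" "F.independent B"
  shows "finite (F.span B) \<and> card (F.span B) = 2 ^ card B"
  using assms
proof (induction B rule: finite_induct)
  case empty then show ?case by simp
next
  case (insert x B)
  hence "F.independent B" "x \<notin> F.span B" using F.independent_insert by auto
  with insert show ?case using card_span_insert[of B x] by auto
qed

definition sub :: "nat \<Rightarrow> (nat \<Rightarrow> bit) set \<Rightarrow> bool" where
  "sub \<kappa> S \<longleftrightarrow> F.subspace S \<and> S \<subseteq> Wsp \<kappa>"

lemma bij_Wsp: "bij_betw (\<lambda>v. restrict v {..<\<kappa>}) (Wsp \<kappa>) (PiE {..<\<kappa>} (\<lambda>_. UNIV))"
proof (rule bij_betw_byWitness[where f' = "\<lambda>f i. if i < \<kappa> then f i else 0"])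
  show "\<forall>a\<in>Wsp \<kappa>. (\<lambda>i. if i < \<kappa> then restrict a {..<\<kappa>} i else 0) = a"
    by (auto simp: Wsp_def fun_eq_iff)
  show "\<forall>a'\<in>{..<\<kappa>} \<rightarrow>\<^sub>E UNIV. restrict (\<lambda>i. if i < \<kappa> then a' i else 0) {..<\<kappa>} = a'"
    by (auto simp: fun_eq_iff PiE_def extensional_def)
  show "(\<lambda>v. restrict v {..<\<kappa>}) ` Wsp \<kappa> \<subseteq> {..<\<kappa>} \<rightarrow>\<^sub>E UNIV" by (auto simp: PiE_def)
  show "(\<lambda>f i. if i < \<kappa> then f i else 0) ` ({..<\<kappa>} \<rightarrow>\<^sub>E UNIV) \<subseteq> Wsp \<kappa>"
    by (auto simp: Wsp_def)
qed

lemma card_Wsp: "card (Wsp \<kappa>) = 2 ^ \<kappa>" and finite_Wsp: "finite (Wsp \<kappa>)"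
proof -
  have "card (PiE {..<\<kappa>} (\<lambda>_. UNIV::bit set)) = 2 ^ \<kappa>"
    by (simp add: card_PiE card_bit)
  thus "card (Wsp \<kappa>) = 2 ^ \<kappa>" using bij_betw_same_card[OF bij_Wsp] by metis
  thus "finite (Wsp \<kappa>)" by (metis card.infinite power_not_zero zero_neq_numeral)
qed

lemma subspace_Wsp: "F.subspace (Wsp \<kappa>)"
  by (auto simp: F.subspace_def Wsp_def vscale_def)

lemma sub_card:
  assumes "sub \<kappa> S"
  shows "finite S" "card S = 2 ^ F.dim S"
proof -
  show fin: "finite S" using assms finite_Wsp unfolding sub_def by (meson finite_subset)
  obtain B where B: "B \<subseteq> S" "F.independent B" "S \<subseteq> F.span B" "card B = F.dim S"
    using F.basis_exists by blast
  have "F.span B = S" using B assms unfolding sub_def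
    by (meson F.span_minimal subset_antisym)
  moreover have "finite B" using B fin finite_subset by auto
  ultimately show "card S = 2 ^ F.dim S" using card_span_indep[of B] B by auto
qed



definition u :: "nat \<Rightarrow> nat \<Rightarrow> real" where
  "u m d = (\<Prod>i<d. 2 ^ (m - i) - 1)"

definition gb :: "nat \<Rightarrow> nat \<Rightarrow> real" where
  "gb m d = u m d / u d d"

lemma u_zero: "m < d \<Longrightarrow> u m d = 0"
  unfolding u_def by (rule prod_zero) (auto intro: bexI[of _ m])

lemma u_pos: "u d d > 0"
  unfolding u_def by (rule prod_pos) (auto simp: one_less_power)

lemma u_shift: "u (Suc m) (Suc d) = (2 ^ Suc m - 1) * u m d"
  unfolding u_def by (subst prod.lessThan_Suc_shift) simp

lemma u_last: "u m (Suc d) = u m d * (2 ^ (m - d) - 1)"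
  unfolding u_def by simp

lemma gb_ratio:
  assumes "d < Suc m"
  shows "(2 ^ (Suc m - d) - 1) * gb (Suc m) d = (2 ^ Suc m - 1) * gb m d"
proof -
  have "(2 ^ (Suc m - d) - 1) * u (Suc m) d = u (Suc m) (Suc d)" using u_last[of "Suc m" d] by simp
  also have "\<dots> = (2 ^ Suc m - 1) * u m d" by (rule u_shift)
  finally show ?thesis unfolding gb_def by (simp add: field_simps)
qed

lemma gb_zero: "m < d \<Longrightarrow> gb m d = 0" by (simp add: gb_def u_zero)
lemma gb_diag: "gb m m = 1" using u_pos[of m] by (simp add: gb_def)

lemma u_rec: "u (Suc m) (Suc d) = (2 ^ Suc d - 1) * u m d + 2 ^ Suc d * u m (Suc d)"
proof (cases "d \<le> m")
  case True
  have "(2::real) ^ Suc d * 2 ^ (m - d) = 2 ^ Suc m"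
    using True by (simp flip: power_add)
  have e: "(2::real) ^ Suc d * (2 ^ (m - d) - 1) = 2 ^ Suc m - 2 ^ Suc d"
    using \<open>(2::real) ^ Suc d * 2 ^ (m - d) = 2 ^ Suc m\<close> by (simp add: algebra_simps)
  have "u (Suc m) (Suc d) = (2 ^ Suc m - 1) * u m d" by (rule u_shift)
  also have "\<dots> = (2 ^ Suc d - 1) * u m d + (2 ^ Suc d * (2 ^ (m - d) - 1)) * u m d"
    unfolding e by (simp add: algebra_simps)
  also have "\<dots> = (2 ^ Suc d - 1) * u m d + 2 ^ Suc d * u m (Suc d)"
    by (simp add: u_last)
  finally show ?thesis .
next
  case False
  then show ?thesis by (simp add: u_shift u_zero)
qed

definition s :: "nat \<Rightarrow> nat \<Rightarrow> real" where
  "s M m = (\<Sum>i<M. (-1) ^ i * u m (Suc i) / (2 ^ Suc i - 1))"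

lemma s_val: "m \<le> M \<Longrightarrow> s M m = m"
proof (induction m arbitrary: M)
  case 0
  then show ?case by (simp add: s_def u_zero)
next
  case (Suc m)
  define f where "f i = (-1) ^ i * u m i" for i
  have step: "(-1) ^ i * u (Suc m) (Suc i) / (2 ^ Suc i - 1)
      = (f i - f (Suc i)) + (-1) ^ i * u m (Suc i) / (2 ^ Suc i - 1)" for i
  proof -
    have ne: "(2::real) ^ Suc i - 1 \<noteq> 0"
      using one_less_power[of "2::real" "Suc i"] by simp
    show ?thesis unfolding u_rec f_def using ne by (simp add: field_simps)
  qed
  have "s M (Suc m) = (\<Sum>i<M. f i - f (Suc i)) + s M m"
    unfolding s_def step by (simp add: sum.distrib)
  also have "(\<Sum>i<M. f i - f (Suc i)) = f 0 - f M"
    using sum_lessThan_telescope'[of f M] by simp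
  also have "f M = 0" using Suc.prems by (simp add: f_def u_zero)
  also have "f 0 = 1" by (simp add: f_def u_def)
  finally show ?case using Suc by simp
qed

lemma Kc_u: "Kc (Suc i) * (2 ^ Suc i - 1) = (-1) ^ i * u (Suc i) (Suc i)"
proof (induction i)
  case 0
  then show ?case by (simp add: Kc_def u_def)
next
  case (Suc i)
  have kk: "Kc (Suc (Suc i)) = Kc (Suc i) * (1 - 2 ^ Suc i)"
    unfolding Kc_def by (simp add: prod.atLeastLessThan_Suc)
  have "Kc (Suc (Suc i)) * (2 ^ Suc (Suc i) - 1)
      = (1 - 2 ^ Suc i) * (2 ^ Suc (Suc i) - 1) * (Kc (Suc i) * (2 ^ Suc i - 1)) / (2 ^ Suc i - 1)"
    unfolding kk using one_less_power[of "2::real" "Suc i"] by (simp add: field_simps)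
  also have "\<dots> = (1 - 2 ^ Suc i) * (2 ^ Suc (Suc i) - 1) * ((-1) ^ i * u (Suc i) (Suc i)) / (2 ^ Suc i - 1)"
    using Suc by simp
  also have "\<dots> = (-1) ^ Suc i * ((2 ^ Suc (Suc i) - 1) * u (Suc i) (Suc i))"
    using one_less_power[of "2::real" "Suc i"] by (simp add: field_simps)
  also have "\<dots> = (-1) ^ Suc i * u (Suc (Suc i)) (Suc (Suc i))" by (simp only: u_shift)
  finally show ?case .
qed

lemma sum_Kc_gb:
  assumes "m \<le> M"
  shows "(\<Sum>\<delta>=1..M. Kc \<delta> * gb m \<delta>) = m"
proof -
  have "Kc (Suc i) * gb m (Suc i) = (-1) ^ i * u m (Suc i) / (2 ^ Suc i - 1)" for i
  proof -
    have ne: "(2::real) ^ Suc i - 1 \<noteq> 0"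
      using one_less_power[of "2::real" "Suc i"] by simp
    have "Kc (Suc i) = (-1) ^ i * u (Suc i) (Suc i) / (2 ^ Suc i - 1)"
      using Kc_u[of i] ne by (simp add: field_simps)
    thus ?thesis using u_pos[of "Suc i"] unfolding gb_def by (simp add: field_simps)
  qed
  hence "(\<Sum>i<M. Kc (Suc i) * gb m (Suc i)) = s M m"
    unfolding s_def by simp
  moreover have "(\<Sum>\<delta>=1..M. Kc \<delta> * gb m \<delta>) = (\<Sum>i<M. Kc (Suc i) * gb m (Suc i))"
    by (rule sum_bounds_lt_plus1[symmetric])
  ultimately have "(\<Sum>\<delta>=1..M. Kc \<delta> * gb m \<delta>) = s M m" by simp
  thus ?thesis using s_val[OF assms] by simp
qed



lemma sub_dim_le:
  assumes "sub \<kappa> U" "sub \<kappa> S" "U \<subseteq> S" shows "F.dim U \<le> F.dim S"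
proof -
  have "card U \<le> card S" using card_mono[OF sub_card(1)[OF assms(2)] assms(3)] .
  hence "(2::nat) ^ F.dim U \<le> 2 ^ F.dim S" using assms sub_card by simp
  thus ?thesis by simp
qed

lemma sub_dim_eq:
  assumes "sub \<kappa> U" "sub \<kappa> S" "U \<subseteq> S" "F.dim U = F.dim S" shows "U = S"
  using assms sub_card[OF assms(1)] sub_card[OF assms(2)] by (metis card_subset_eq)

lemma sub_Wsp: "sub \<kappa> (Wsp \<kappa>)" by (simp add: sub_def subspace_Wsp)

lemma dim_Wsp: "F.dim (Wsp \<kappa>) = \<kappa>"
  using sub_card[OF sub_Wsp, of \<kappa>] card_Wsp[of \<kappa>] by simp

lemma sub_dim_le_k: "sub \<kappa> S \<Longrightarrow> F.dim S \<le> \<kappa>"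
  using sub_dim_le[OF _ sub_Wsp] dim_Wsp by (metis sub_def)

lemma sub_insert:
  assumes "sub \<kappa> U" "v \<in> Wsp \<kappa>" "v \<notin> U"
  shows "sub \<kappa> (F.span (insert v U))" "F.dim (F.span (insert v U)) = Suc (F.dim U)"
proof -
  have sU: "F.span U = U" using assms(1) by (simp add: sub_def)
  show s: "sub \<kappa> (F.span (insert v U))" unfolding sub_def
    using assms F.span_minimal[OF _ subspace_Wsp] by (auto simp: sub_def)
  have "card (F.span (insert v U)) = 2 * card U"
    using card_span_insert(1)[of U v] sU assms sub_card(1)[OF assms(1)] by simp
  hence "(2::nat) ^ F.dim (F.span (insert v U)) = 2 ^ Suc (F.dim U)"
    using sub_card(2)[OF s] sub_card(2)[OF assms(1)] by simp
  thus "F.dim (F.span (insert v U)) = Suc (F.dim U)"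
    using power_inject_exp[of "2::nat"] by (metis one_less_numeral_iff semiring_norm(76))
qed

lemma finite_subs: "finite {S. sub \<kappa> S \<and> P S}"
  by (rule finite_subset[of _ "Pow (Wsp \<kappa>)"]) (auto simp: sub_def finite_Wsp)

lemma count_gt:
  assumes "sub \<kappa> U" "F.dim U = \<kappa> - m" "m < \<delta>" "\<delta> \<le> \<kappa>"
  shows "{S. sub \<kappa> S \<and> F.dim S = \<kappa> - \<delta> \<and> U \<subseteq> S} = {}"
  using assms sub_dim_le[OF assms(1)] by fastforce

lemma count_eq:
  assumes "sub \<kappa> U" "F.dim U = \<kappa> - m" "m \<le> \<kappa>"
  shows "{S. sub \<kappa> S \<and> F.dim S = \<kappa> - m \<and> U \<subseteq> S} = {U}"
proof -
  have "S = U" if "sub \<kappa> S" "F.dim S = \<kappa> - m" "U \<subseteq> S" for S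
    using sub_dim_eq[OF assms(1) that(1) that(3)] that(2) assms(2) by simp
  thus ?thesis using assms by auto
qed

lemma count:
  assumes "m \<le> \<kappa>" "sub \<kappa> U" "F.dim U = \<kappa> - m" "\<delta> \<le> \<kappa>"
  shows "real (card {S. sub \<kappa> S \<and> F.dim S = \<kappa> - \<delta> \<and> U \<subseteq> S}) = gb m \<delta>"
  using assms
proof (induction m arbitrary: U \<delta>)
  case 0
  show ?case
  proof (cases "0 < \<delta>")
    case True
    then show ?thesis unfolding count_gt[OF 0(2,3) True 0(4)] using gb_zero[OF True] by simp
  next
    case False
    then show ?thesis using count_eq[OF 0(2,3) 0(1)] gb_diag[of 0] by simp
  qed
next
  case (Suc m)
  show ?case
  proof (cases "Suc m \<le> \<delta>")
    case True
    show ?thesis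
    proof (cases "Suc m = \<delta>")
      case True
      then show ?thesis using count_eq[OF Suc(3,4,2)] gb_diag by simp
    next
      case False
      hence lt: "Suc m < \<delta>" using True by simp
      then show ?thesis unfolding count_gt[OF Suc(3,4) lt Suc(5)] using gb_zero[OF lt] by simp
    qed
  next
    case False
    hence dl: "\<delta> < Suc m" by simp
    define A where "A = {S. sub \<kappa> S \<and> F.dim S = \<kappa> - \<delta> \<and> U \<subseteq> S}"
    define B where "B = Wsp \<kappa> - U"
    have fA: "finite A" unfolding A_def by (rule finite_subs)
    have fB: "finite B" unfolding B_def using finite_Wsp by simp
    have UW: "U \<subseteq> Wsp \<kappa>" using Suc(3) by (simp add: sub_def)
    have cU: "card U = 2 ^ (\<kappa> - Suc m)" using sub_card(2)[OF Suc(3)] Suc(4) by simp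
    have fU: "finite U" using sub_card(1)[OF Suc(3)] .
    have cB: "card B = 2 ^ \<kappa> - 2 ^ (\<kappa> - Suc m)"
      unfolding B_def using card_Diff_subset[OF fU UW] card_Wsp cU by simp
    have 1: "card {v \<in> B. v \<in> S} = 2 ^ (\<kappa> - \<delta>) - 2 ^ (\<kappa> - Suc m)" if "S \<in> A" for S
    proof -
      have sS: "sub \<kappa> S" "F.dim S = \<kappa> - \<delta>" "U \<subseteq> S" using that by (auto simp: A_def)
      have "{v \<in> B. v \<in> S} = S - U" using sS(1) by (auto simp: B_def sub_def)
      thus ?thesis using card_Diff_subset[OF fU sS(3)] sub_card(2)[OF sS(1)] sS(2) cU by simp
    qed
    have 2: "real (card {S \<in> A. v \<in> S}) = gb m \<delta>" if "v \<in> B" for v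
    proof -
      have v: "v \<in> Wsp \<kappa>" "v \<notin> U" using that by (auto simp: B_def)
      note ins = sub_insert[OF Suc(3) v]
      have "{S \<in> A. v \<in> S} = {S. sub \<kappa> S \<and> F.dim S = \<kappa> - \<delta> \<and> F.span (insert v U) \<subseteq> S}"
      proof -
        have "U \<subseteq> S \<and> v \<in> S \<longleftrightarrow> F.span (insert v U) \<subseteq> S" if "F.subspace S" for S
          using F.span_minimal[of "insert v U" S, OF _ that] F.span_superset[of "insert v U"] by auto
        thus ?thesis unfolding A_def sub_def by blast
      qed
      moreover have "F.dim (F.span (insert v U)) = \<kappa> - m" using ins(2) Suc(2,4) by simp
      ultimately show ?thesis using Suc.IH[of "F.span (insert v U)" \<delta>] Suc(2,5) ins(1) by simp
    qed
    have sw: "(\<Sum>S\<in>A. card {v \<in> B. v \<in> S}) = (\<Sum>v\<in>B. card {S \<in> A. v \<in> S})"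
      using sum.swap_restrict[OF fA fB, of "\<lambda>_ _. 1::nat" "\<lambda>S v. v \<in> S"] by simp
    have H: "real (card A) * real (2 ^ (\<kappa> - \<delta>) - 2 ^ (\<kappa> - Suc m)) = real (card B) * gb m \<delta>"
    proof -
      have "real (\<Sum>v\<in>B. card {S \<in> A. v \<in> S}) = (\<Sum>v\<in>B. gb m \<delta>)"
        unfolding of_nat_sum using 2 by (rule sum.cong[OF refl])
      moreover have "(\<Sum>S\<in>A. card {v \<in> B. v \<in> S}) = card A * (2 ^ (\<kappa> - \<delta>) - 2 ^ (\<kappa> - Suc m))"
        using 1 by simp
      ultimately show ?thesis using sw by (metis of_nat_mult sum_constant of_nat_id)
    qed
    have D: "real (2 ^ (\<kappa> - \<delta>) - 2 ^ (\<kappa> - Suc m) :: nat) = 2 ^ (\<kappa> - Suc m) * (2 ^ (Suc m - \<delta>) - 1)"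
    proof -
      have "(2::nat) ^ (\<kappa> - Suc m) \<le> 2 ^ (\<kappa> - \<delta>)" using dl by (simp add: power_increasing)
      moreover have "(2::real) ^ (\<kappa> - \<delta>) = 2 ^ (\<kappa> - Suc m) * 2 ^ (Suc m - \<delta>)"
        using dl Suc(2) by (simp flip: power_add)
      ultimately show ?thesis by (simp add: of_nat_diff algebra_simps)
    qed
    have cB': "real (card B) = 2 ^ (\<kappa> - Suc m) * (2 ^ Suc m - 1)"
    proof -
      have "(2::nat) ^ (\<kappa> - Suc m) \<le> 2 ^ \<kappa>" by (simp add: power_increasing)
      moreover have "(2::real) ^ \<kappa> = 2 ^ (\<kappa> - Suc m) * 2 ^ Suc m"
        using Suc(2) by (simp only: power_add[symmetric]) simp
      ultimately show ?thesis using cB by (simp add: of_nat_diff algebra_simps)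
    qed
    have "2 ^ (\<kappa> - Suc m) * (real (card A) * (2 ^ (Suc m - \<delta>) - 1))
        = 2 ^ (\<kappa> - Suc m) * ((2 ^ Suc m - 1) * gb m \<delta>)"
      using H unfolding D cB' by (simp add: mult_ac)
    hence "real (card A) * (2 ^ (Suc m - \<delta>) - 1) = (2 ^ Suc m - 1) * gb m \<delta>"
      by simp
    also have "\<dots> = (2 ^ (Suc m - \<delta>) - 1) * gb (Suc m) \<delta>" using gb_ratio[OF dl] by simp
    finally have FF: "real (card A) * (2 ^ (Suc m - \<delta>) - 1) = (2 ^ (Suc m - \<delta>) - 1) * gb (Suc m) \<delta>" .
    have "(2::real) ^ (Suc m - \<delta>) > 1" using dl by (intro one_less_power) auto
    hence "real (card A) = gb (Suc m) \<delta>" using FF by simp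
    thus ?thesis unfolding A_def .
  qed
qed



lemma Xi_eq: "Xi (Wsp \<kappa>) d = {S. sub \<kappa> S \<and> F.dim S = d}"
  by (auto simp: Xi_def sub_def F2subspace_def F2dim_def)

lemma finite_Xi: "finite (Xi (Wsp \<kappa>) d)"
  unfolding Xi_eq by (rule finite_subs)

lemma key:
  assumes "X \<subseteq> Wsp \<kappa>"
  shows "real \<kappa> - real (F2dim X) = (\<Sum>\<delta>=1..\<kappa>. Kc \<delta> * real (card {S \<in> Xi (Wsp \<kappa>) (\<kappa> - \<delta>). X \<subseteq> S}))"
proof -
  define U where "U = F.span X"
  have sU: "sub \<kappa> U" unfolding U_def sub_def using F.span_minimal[OF assms subspace_Wsp] by simp
  define m where "m = \<kappa> - F.dim U"
  have mk: "m \<le> \<kappa>" unfolding m_def by simp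
  have dU: "F.dim U = \<kappa> - m" unfolding m_def using sub_dim_le_k[OF sU] by simp
  have "{S \<in> Xi (Wsp \<kappa>) (\<kappa> - \<delta>). X \<subseteq> S} = {S. sub \<kappa> S \<and> F.dim S = \<kappa> - \<delta> \<and> U \<subseteq> S}" for \<delta>
    unfolding Xi_eq U_def sub_def using F.span_minimal[of X] F.span_superset[of X] by blast
  hence "(\<Sum>\<delta>=1..\<kappa>. Kc \<delta> * real (card {S \<in> Xi (Wsp \<kappa>) (\<kappa> - \<delta>). X \<subseteq> S}))
       = (\<Sum>\<delta>=1..\<kappa>. Kc \<delta> * gb m \<delta>)"
    using count[OF mk sU dU] by simp
  also have "\<dots> = m" by (rule sum_Kc_gb[OF mk])
  also have "real m = real \<kappa> - real (F2dim X)"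
    using dU mk unfolding F2dim_def U_def by simp
  finally show ?thesis by simp
qed

lemma nu_Wsp: "nu \<kappa> i \<in> Wsp \<kappa>" by (simp add: nu_def Wsp_def)

lemma col_Wsp: "col \<kappa> G j \<in> Wsp \<kappa>" by (simp add: col_def Wsp_def)

lemma nu_inj: "inj_on (nu \<kappa>) {..<2 ^ \<kappa>}"
proof (rule inj_onI)
  fix i j assume i: "i \<in> {..<2 ^ \<kappa>}" and j: "j \<in> {..<2 ^ \<kappa>}" and e: "nu \<kappa> i = nu \<kappa> j"
  have "bit i t = bit j t" for t
  proof (cases "t < \<kappa>")
    case True
    have "(of_bool (odd (i div 2 ^ t)) :: bit) = of_bool (odd (j div 2 ^ t))"
      using fun_cong[OF e, of t] True by (simp add: nu_def)
    hence "odd (i div 2 ^ t) = odd (j div 2 ^ t)" by (simp add: of_bool_eq_iff)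
    then show ?thesis by (simp add: bit_iff_odd)
  next
    case False
    have le: "(2::nat) ^ \<kappa> \<le> 2 ^ t" using False by (simp add: power_increasing)
    have "i < 2 ^ \<kappa>" "j < 2 ^ \<kappa>" using i j by auto
    hence "i < 2 ^ t" "j < 2 ^ t" using le by linarith+
    hence "i div 2 ^ t = 0" "j div 2 ^ t = 0" by simp_all
    then show ?thesis by (simp add: bit_iff_odd)
  qed
  thus "i = j" by (simp add: bit_eq_iff)
qed

lemma nu_image: "nu \<kappa> ` {..<2 ^ \<kappa>} = Wsp \<kappa>"
proof -
  have "card (nu \<kappa> ` {..<2 ^ \<kappa>}) = card (Wsp \<kappa>)"
    using card_image[OF nu_inj] card_Wsp by simp
  moreover have "nu \<kappa> ` {..<2 ^ \<kappa>} \<subseteq> Wsp \<kappa>" using nu_Wsp by auto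
  ultimately show ?thesis using finite_Wsp card_subset_eq by blast
qed

lemma zeta_cdv:
  "zeta \<kappa> S (cdv \<kappa> n G) = real (card {j. j < n \<and> col \<kappa> G j \<in> S}) / real n"
proof -
  define I where "I = {i. i < 2 ^ \<kappa> \<and> nu \<kappa> i \<in> S}"
  define A where "A i = {j. j < n \<and> col \<kappa> G j = nu \<kappa> i}" for i
  have "card (\<Union>(A ` I)) = (\<Sum>i\<in>I. card (A i))"
  proof (rule card_UN_disjoint)
    show "finite I" unfolding I_def by simp
    show "\<forall>i\<in>I. finite (A i)" unfolding A_def by simp
    show "\<forall>i\<in>I. \<forall>j\<in>I. i \<noteq> j \<longrightarrow> A i \<inter> A j = {}"
      using nu_inj[of \<kappa>] unfolding I_def A_def inj_on_def by auto
  qed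
  moreover have "\<Union>(A ` I) = {j. j < n \<and> col \<kappa> G j \<in> S}"
  proof -
    have ex: "\<exists>i<2 ^ \<kappa>. col \<kappa> G j = nu \<kappa> i" for j
    proof -
      have "col \<kappa> G j \<in> nu \<kappa> ` {..<2 ^ \<kappa>}" using col_Wsp[of \<kappa> G j] nu_image[of \<kappa>] by simp
      thus ?thesis by auto
    qed
    show ?thesis
    proof (rule set_eqI, rule iffI)
      fix j assume "j \<in> \<Union>(A ` I)"
      then obtain i where "i \<in> I" "j \<in> A i" by blast
      thus "j \<in> {j. j < n \<and> col \<kappa> G j \<in> S}" unfolding A_def I_def by simp
    next
      fix j assume j: "j \<in> {j. j < n \<and> col \<kappa> G j \<in> S}"
      obtain i where "i < 2 ^ \<kappa>" "col \<kappa> G j = nu \<kappa> i" using ex by blast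
      hence "i \<in> I" "j \<in> A i" using j unfolding A_def I_def by auto
      thus "j \<in> \<Union>(A ` I)" by blast
    qed
  qed
  ultimately have "real (card {j. j < n \<and> col \<kappa> G j \<in> S}) = (\<Sum>i\<in>I. real (card (A i)))"
    by (simp only: of_nat_sum)
  hence "real (card {j. j < n \<and> col \<kappa> G j \<in> S}) / real n = (\<Sum>i\<in>I. real (card (A i)) / real n)"
    by (simp only: sum_divide_distrib)
  thus ?thesis unfolding zeta_def cdv_def I_def A_def by (rule sym)
qed

lemma pow_sum_card:
  fixes f :: "nat \<Rightarrow> real"
  assumes "finite A"
  shows "(\<Sum>R\<in>Pow A. f (card R)) = (\<Sum>k\<le>card A. real (card A choose k) * f k)"
proof -
  have "(\<Sum>R\<in>Pow A. f (card R)) = (\<Sum>k\<le>card A. \<Sum>R\<in>{R. R \<in> Pow A \<and> card R = k}. f (card R))"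
    by (rule sum.group[symmetric]) (use assms in \<open>auto simp: card_mono\<close>)
  also have "\<dots> = (\<Sum>k\<le>card A. real (card A choose k) * f k)"
  proof (rule sum.cong[OF refl])
    fix k
    have "{R. R \<in> Pow A \<and> card R = k} = {R. R \<subseteq> A \<and> card R = k}" by auto
    hence "card {R. R \<in> Pow A \<and> card R = k} = card A choose k" using n_subsets[OF assms] by simp
    moreover have "(\<Sum>R\<in>{R. R \<in> Pow A \<and> card R = k}. f (card R)) = (\<Sum>R\<in>{R. R \<in> Pow A \<and> card R = k}. f k)"
      by (rule sum.cong) auto
    ultimately show "(\<Sum>R\<in>{R. R \<in> Pow A \<and> card R = k}. f (card R)) = real (card A choose k) * f k"
      by simp
  qed
  finally show ?thesis .
qed

lemma binom_sum1:
  fixes p e :: real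
  shows "(\<Sum>k\<le>N. real (N choose k) * (p ^ k * e ^ (N - k))) = (p + e) ^ N"
  by (simp add: binomial_ring mult_ac)

lemma binom_sum2:
  fixes p e :: real
  shows "(\<Sum>k\<le>N. real (N choose k) * (p ^ k * e ^ (N - k) * real k)) = real N * p * (p + e) ^ (N - 1)"
proof (cases N)
  case 0
  then show ?thesis by simp
next
  case (Suc M)
  have "(\<Sum>k\<le>Suc M. real (Suc M choose k) * (p ^ k * e ^ (Suc M - k) * real k))
      = (\<Sum>k\<le>M. real (Suc M choose Suc k) * (p ^ Suc k * e ^ (Suc M - Suc k) * real (Suc k)))"
    by (subst sum.atMost_Suc_shift) simp
  also have "\<dots> = (\<Sum>k\<le>M. real (Suc M) * p * (real (M choose k) * (p ^ k * e ^ (M - k))))"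
  proof (rule sum.cong[OF refl])
    fix k
    have "real (Suc M choose Suc k) * real (Suc k) = real (Suc M) * real (M choose k)"
      using Suc_times_binomial_eq[of M k] by (metis of_nat_mult)
    moreover have "real (Suc M choose Suc k) * (p ^ Suc k * e ^ (Suc M - Suc k) * real (Suc k))
        = (real (Suc M choose Suc k) * real (Suc k)) * (p * (p ^ k * e ^ (M - k)))"
      by (simp only: power_Suc diff_Suc_Suc mult_ac)
    ultimately show "real (Suc M choose Suc k) * (p ^ Suc k * e ^ (Suc M - Suc k) * real (Suc k))
        = real (Suc M) * p * (real (M choose k) * (p ^ k * e ^ (M - k)))"
      by (simp only: mult_ac)
  qed
  also have "\<dots> = real (Suc M) * p * (p + e) ^ M"
    by (simp add: sum_distrib_left[symmetric] binom_sum1)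
  finally show ?thesis using Suc by simp
qed

lemma choose_ratio:
  assumes "\<mu> \<le> n" "0 < n"
  shows "real (N choose \<mu>) / real (n choose \<mu>)
       = (\<Prod>i<\<mu>. (real N / real n - real i / real n) / (1 - real i / real n))"
proof -
  have "real (N choose \<mu>) / real (n choose \<mu>)
      = (\<Prod>i<\<mu>. (real N - real i) / real (\<mu> - i)) / (\<Prod>i<\<mu>. (real n - real i) / real (\<mu> - i))"
    by (simp only: binomial_gbinomial gbinomial_altdef_of_nat atLeast0LessThan)
  also have "\<dots> = (\<Prod>i<\<mu>. ((real N - real i) / real (\<mu> - i)) / ((real n - real i) / real (\<mu> - i)))"
    by (rule prod_dividef[symmetric])
  also have "\<dots> = (\<Prod>i<\<mu>. (real N / real n - real i / real n) / (1 - real i / real n))"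
  proof (rule prod.cong[OF refl])
    fix i assume "i \<in> {..<\<mu>}"
    hence a: "real n - real i \<noteq> 0" "real (\<mu> - i) \<noteq> 0" "real n \<noteq> 0" using assms by auto
    have "((real N - real i) / real (\<mu> - i)) / ((real n - real i) / real (\<mu> - i))
        = (real N - real i) / (real n - real i)"
    proof -
      have g: "(x / c) / (y / c) = x / y" if "c \<noteq> 0" for x y c :: real
        using that by (cases "y = 0") (simp_all add: field_simps)
      show ?thesis by (rule g[OF a(2)])
    qed
    also have "\<dots> = (real N / real n - real i / real n) / (1 - real i / real n)"
      using a by (simp add: field_simps)
    finally show "((real N - real i) / real (\<mu> - i)) / ((real n - real i) / real (\<mu> - i))
        = (real N / real n - real i / real n) / (1 - real i / real n)" .
  qed
  finally show ?thesis .
qed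



lemma phi_val:
  assumes "n \<ge> 1" "N \<le> n" "0 \<le> \<epsilon>" "zeta \<kappa> S q = real N / real n"
  shows "phi \<kappa> S n \<epsilon> q = \<epsilon> ^ (n - N)"
proof -
  have e: "real n * (1 - zeta \<kappa> S q) = real (n - N)"
    using assms by (simp add: field_simps of_nat_diff)
  show ?thesis
  proof (cases "N = n")
    case True
    then show ?thesis unfolding phi_def Let_def e by simp
  next
    case False
    hence pos: "n - N > 0" using assms by simp
    show ?thesis
    proof (cases "\<epsilon> = 0")
      case True
      then show ?thesis unfolding phi_def Let_def e using pos by simp
    next
      case False
      hence "\<epsilon> > 0" using assms by simp
      hence "\<epsilon> powr real (n - N) = \<epsilon> ^ (n - N)" by (rule powr_realpow)
      then show ?thesis unfolding phi_def Let_def e using pos by simp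
    qed
  qed
qed

lemma wsum_sub:
  fixes \<epsilon> :: real
  assumes "finite A" "card A \<le> n"
  shows "(\<Sum>R\<in>Pow A. (1 - \<epsilon>) ^ card R * \<epsilon> ^ (n - card R)) = \<epsilon> ^ (n - card A)"
proof -
  have "(\<Sum>R\<in>Pow A. (1 - \<epsilon>) ^ card R * \<epsilon> ^ (n - card R))
      = (\<Sum>k\<le>card A. real (card A choose k) * ((1 - \<epsilon>) ^ k * \<epsilon> ^ (n - k)))"
    by (rule pow_sum_card[OF assms(1)])
  also have "\<dots> = (\<Sum>k\<le>card A. \<epsilon> ^ (n - card A) * (real (card A choose k) * ((1 - \<epsilon>) ^ k * \<epsilon> ^ (card A - k))))"
  proof (rule sum.cong[OF refl])
    fix k assume "k \<in> {..card A}"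
    hence "n - k = (n - card A) + (card A - k)" using assms by auto
    thus "real (card A choose k) * ((1 - \<epsilon>) ^ k * \<epsilon> ^ (n - k))
        = \<epsilon> ^ (n - card A) * (real (card A choose k) * ((1 - \<epsilon>) ^ k * \<epsilon> ^ (card A - k)))"
      by (simp add: power_add mult_ac)
  qed
  also have "\<dots> = \<epsilon> ^ (n - card A)"
    by (simp add: sum_distrib_left[symmetric] binom_sum1)
  finally show ?thesis .
qed

lemma swap_w:
  fixes w :: "'a \<Rightarrow> real"
  assumes "finite C" "finite X"
  shows "(\<Sum>R\<in>C. w R * real (card {S \<in> X. P R S})) = (\<Sum>S\<in>X. \<Sum>R\<in>{R \<in> C. P R S}. w R)"
proof -
  have "(\<Sum>R\<in>C. w R * real (card {S \<in> X. P R S})) = (\<Sum>R\<in>C. \<Sum>S\<in>{S \<in> X. P R S}. w R)"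
    by (simp add: mult.commute)
  also have "\<dots> = (\<Sum>S\<in>X. \<Sum>R\<in>{R \<in> C. P R S}. w R)"
    using sum.swap_restrict[OF assms, of "\<lambda>R S. w R" P] by simp
  finally show ?thesis .
qed

lemma swap_c:
  assumes "finite C" "finite X"
  shows "(\<Sum>R\<in>C. real (card {S \<in> X. P R S})) = (\<Sum>S\<in>X. real (card {R \<in> C. P R S}))"
  using swap_w[OF assms, of "\<lambda>_. 1" P] by simp

theorem theorem1:
  fixes \<kappa> n :: nat and G :: "nat \<Rightarrow> nat \<Rightarrow> bit"
  assumes "\<kappa> \<ge> 1" and "n \<ge> 1"
  defines "q \<equiv> cdv \<kappa> n G"
  shows "(\<forall>\<mu>::nat. 0 < \<mu> \<and> \<mu> \<le> n \<longrightarrow>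
           Lloss \<kappa> n G \<mu> = real \<mu> - real \<kappa> +
             (\<Sum>\<delta>=1..\<kappa>. Kc \<delta> * (\<Sum>S\<in>Xi (Wsp \<kappa>) (\<kappa> - \<delta>). Phi \<kappa> S n \<mu> q)))
     \<and> (\<forall>\<epsilon>::real. 0 \<le> \<epsilon> \<and> \<epsilon> \<le> 1 \<longrightarrow>
           lloss \<kappa> n G \<epsilon> = real n * (1 - \<epsilon>) - real \<kappa> +
             (\<Sum>\<delta>=1..\<kappa>. Kc \<delta> * (\<Sum>S\<in>Xi (Wsp \<kappa>) (\<kappa> - \<delta>). phi \<kappa> S n \<epsilon> q)))"
proof -
  define AS where "AS S = {j. j < n \<and> col \<kappa> G j \<in> S}" for S
  define X where "X \<delta> = Xi (Wsp \<kappa>) (\<kappa> - \<delta>)" for \<delta>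
  define P where "P R S \<longleftrightarrow> col \<kappa> G ` R \<subseteq> S" for R S
  have fX: "finite (X \<delta>)" for \<delta> unfolding X_def by (rule finite_Xi)
  have fAS: "finite (AS S)" for S unfolding AS_def by simp
  have cAS: "card (AS S) \<le> n" for S
    using card_mono[of "{..<n}" "AS S"] unfolding AS_def by auto
  have zq: "zeta \<kappa> S q = real (card (AS S)) / real n" for S
    unfolding q_def AS_def by (rule zeta_cdv)
  have PAS: "R \<subseteq> {..<n} \<Longrightarrow> P R S \<longleftrightarrow> R \<subseteq> AS S" for R S
    unfolding P_def AS_def by auto
  have keyR: "real \<kappa> - real (rankR \<kappa> G R) = (\<Sum>\<delta>=1..\<kappa>. Kc \<delta> * real (card {S \<in> X \<delta>. P R S}))" for R
    unfolding rankR_def X_def P_def by (rule key) (use col_Wsp in auto)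
  show ?thesis
  proof (intro conjI allI impI)
    fix \<mu> :: nat assume \<mu>: "0 < \<mu> \<and> \<mu> \<le> n"
    define C where "C = {R. R \<subseteq> {..<n} \<and> card R = \<mu>}"
    have fC: "finite C" unfolding C_def by (rule finite_subset[of _ "Pow {..<n}"]) auto
    have cC: "card C = n choose \<mu>" unfolding C_def using n_subsets[of "{..<n}" \<mu>] by simp
    have cCpos: "real (card C) > 0" using cC \<mu> by simp
    have CS: "{R \<in> C. P R S} = {R. R \<subseteq> AS S \<and> card R = \<mu>}" for S
      unfolding C_def using PAS by (auto simp: AS_def)
    have "(\<Sum>R\<in>C. real (card R) - real (rankR \<kappa> G R))
        = (\<Sum>R\<in>C. (real \<mu> - real \<kappa>) + (\<Sum>\<delta>=1..\<kappa>. Kc \<delta> * real (card {S \<in> X \<delta>. P R S})))"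
    proof (rule sum.cong[OF refl])
      fix R assume "R \<in> C"
      hence "card R = \<mu>" by (simp add: C_def)
      thus "real (card R) - real (rankR \<kappa> G R) = (real \<mu> - real \<kappa>) + (\<Sum>\<delta>=1..\<kappa>. Kc \<delta> * real (card {S \<in> X \<delta>. P R S}))"
        using keyR[of R] by linarith
    qed
    also have "\<dots> = real (card C) * (real \<mu> - real \<kappa>)
        + (\<Sum>\<delta>=1..\<kappa>. Kc \<delta> * (\<Sum>R\<in>C. real (card {S \<in> X \<delta>. P R S})))"
      by (simp add: sum.distrib sum_distrib_left sum.swap[of _ C])
    also have "(\<Sum>\<delta>=1..\<kappa>. Kc \<delta> * (\<Sum>R\<in>C. real (card {S \<in> X \<delta>. P R S})))
        = (\<Sum>\<delta>=1..\<kappa>. Kc \<delta> * (\<Sum>S\<in>X \<delta>. real (card (AS S) choose \<mu>)))"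
    proof (rule sum.cong[OF refl])
      fix \<delta>
      have "(\<Sum>R\<in>C. real (card {S \<in> X \<delta>. P R S})) = (\<Sum>S\<in>X \<delta>. real (card {R \<in> C. P R S}))"
        by (rule swap_c[OF fC fX])
      also have "\<dots> = (\<Sum>S\<in>X \<delta>. real (card (AS S) choose \<mu>))"
        unfolding CS using n_subsets[OF fAS] by simp
      finally show "Kc \<delta> * (\<Sum>R\<in>C. real (card {S \<in> X \<delta>. P R S})) = Kc \<delta> * (\<Sum>S\<in>X \<delta>. real (card (AS S) choose \<mu>))"
        by simp
    qed
    finally have sumC: "(\<Sum>R\<in>C. real (card R) - real (rankR \<kappa> G R)) = real (card C) * (real \<mu> - real \<kappa>)
        + (\<Sum>\<delta>=1..\<kappa>. Kc \<delta> * (\<Sum>S\<in>X \<delta>. real (card (AS S) choose \<mu>)))" .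
    have Phi_eq: "Phi \<kappa> S n \<mu> q = real (card (AS S) choose \<mu>) / real (card C)" for S
      unfolding Phi_def zq cC using choose_ratio[of \<mu> n "card (AS S)"] \<mu> assms(2) by simp
    have "Lloss \<kappa> n G \<mu> = (\<Sum>R\<in>C. real (card R) - real (rankR \<kappa> G R)) / real (card C)"
      unfolding Lloss_def C_def cC[unfolded C_def] by simp
    also have "\<dots> = real \<mu> - real \<kappa> + (\<Sum>\<delta>=1..\<kappa>. Kc \<delta> * (\<Sum>S\<in>X \<delta>. real (card (AS S) choose \<mu>) / real (card C)))"
      unfolding sumC using cCpos by (simp add: add_divide_distrib sum_divide_distrib[symmetric] times_divide_eq_right)
    finally show "Lloss \<kappa> n G \<mu> = real \<mu> - real \<kappa> +
             (\<Sum>\<delta>=1..\<kappa>. Kc \<delta> * (\<Sum>S\<in>Xi (Wsp \<kappa>) (\<kappa> - \<delta>). Phi \<kappa> S n \<mu> q))"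
      unfolding X_def Phi_eq .
  next
    fix \<epsilon> :: real assume \<epsilon>: "0 \<le> \<epsilon> \<and> \<epsilon> \<le> 1"
    define w where "w R = (1 - \<epsilon>) ^ card R * \<epsilon> ^ (n - card R)" for R :: "nat set"
    define Pn where "Pn = Pow {..<n}"
    have fPn: "finite Pn" unfolding Pn_def by simp
    have s1: "(\<Sum>R\<in>Pn. w R) = 1"
      unfolding Pn_def w_def using pow_sum_card[of "{..<n}" "\<lambda>k. (1 - \<epsilon>) ^ k * \<epsilon> ^ (n - k)"]
      by (simp add: binom_sum1)
    have s2: "(\<Sum>R\<in>Pn. w R * real (card R)) = real n * (1 - \<epsilon>)"
      unfolding Pn_def w_def using pow_sum_card[of "{..<n}" "\<lambda>k. (1 - \<epsilon>) ^ k * \<epsilon> ^ (n - k) * real k"]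
      by (simp add: binom_sum2)
    have s3: "(\<Sum>R\<in>Pn. w R * (real \<kappa> - real (rankR \<kappa> G R)))
        = (\<Sum>\<delta>=1..\<kappa>. Kc \<delta> * (\<Sum>S\<in>X \<delta>. \<epsilon> ^ (n - card (AS S))))"
    proof -
      have "(\<Sum>R\<in>Pn. w R * (real \<kappa> - real (rankR \<kappa> G R)))
          = (\<Sum>\<delta>=1..\<kappa>. Kc \<delta> * (\<Sum>R\<in>Pn. w R * real (card {S \<in> X \<delta>. P R S})))"
        unfolding keyR by (simp add: sum_distrib_left sum.swap[of _ Pn] mult_ac)
      also have "\<dots> = (\<Sum>\<delta>=1..\<kappa>. Kc \<delta> * (\<Sum>S\<in>X \<delta>. \<epsilon> ^ (n - card (AS S))))"
      proof (rule sum.cong[OF refl])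
        fix \<delta>
        have "(\<Sum>R\<in>Pn. w R * real (card {S \<in> X \<delta>. P R S})) = (\<Sum>S\<in>X \<delta>. \<Sum>R\<in>{R \<in> Pn. P R S}. w R)"
          by (rule swap_w[OF fPn fX])
        also have "\<dots> = (\<Sum>S\<in>X \<delta>. \<epsilon> ^ (n - card (AS S)))"
        proof (rule sum.cong[OF refl])
          fix S
          have "{R \<in> Pn. P R S} = Pow (AS S)" unfolding Pn_def using PAS by (auto simp: AS_def)
          thus "(\<Sum>R\<in>{R \<in> Pn. P R S}. w R) = \<epsilon> ^ (n - card (AS S))"
            unfolding w_def using wsum_sub[OF fAS cAS] by simp
        qed
        finally show "Kc \<delta> * (\<Sum>R\<in>Pn. w R * real (card {S \<in> X \<delta>. P R S}))
            = Kc \<delta> * (\<Sum>S\<in>X \<delta>. \<epsilon> ^ (n - card (AS S)))" by simp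
      qed
      finally show ?thesis .
    qed
    have "lloss \<kappa> n G \<epsilon> = (\<Sum>R\<in>Pn. w R * real (card R) - real \<kappa> * w R + w R * (real \<kappa> - real (rankR \<kappa> G R)))"
      unfolding lloss_def Pn_def w_def by (rule sum.cong[OF refl]) (simp add: algebra_simps)
    also have "\<dots> = real n * (1 - \<epsilon>) - real \<kappa> + (\<Sum>\<delta>=1..\<kappa>. Kc \<delta> * (\<Sum>S\<in>X \<delta>. \<epsilon> ^ (n - card (AS S))))"
      using s1 s2 s3 by (simp add: sum.distrib sum_subtractf sum_distrib_left[symmetric])
    also have "(\<Sum>\<delta>=1..\<kappa>. Kc \<delta> * (\<Sum>S\<in>X \<delta>. \<epsilon> ^ (n - card (AS S))))
        = (\<Sum>\<delta>=1..\<kappa>. Kc \<delta> * (\<Sum>S\<in>X \<delta>. phi \<kappa> S n \<epsilon> q))"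
      using phi_val[OF assms(2) cAS _ zq] \<epsilon> by simp
    finally show "lloss \<kappa> n G \<epsilon> = real n * (1 - \<epsilon>) - real \<kappa> +
             (\<Sum>\<delta>=1..\<kappa>. Kc \<delta> * (\<Sum>S\<in>Xi (Wsp \<kappa>) (\<kappa> - \<delta>). phi \<kappa> S n \<epsilon> q))"
      unfolding X_def .
  qed
qed

end
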